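(* Let $(w_i)_{i\in[n]}$ be positive weights, $W_n=w_I$ with $I$ uniform on $[n]$, $\beta\ge0$, $h\in\mathbb R$, and let $\sigma$ be distributed according to $$\mu_n(\sigma)=\frac{1}{Z_n}\exp\Big(\frac{\beta}{2n\mathbb E[W_n]}\Big(\sum_iw_i\sigma_i\Big)^2+h\sum_i\sigma_i\Big),\quad\sigma\in\{-1,1\}^n.$$ Define $$c_n(s)=\frac1n\log\mathbb E\Big[\exp\Big(s\sqrt{\tfrac{\beta}{\mathbb E[W_n]}}\sum_{i\in[n]}w_i\sigma_i\Big)\Big],$$ $$G_n(x;s)=\frac{x^2}{2}-\mathbb E\Big[\log\cosh\Big(\sqrt{\tfrac{\beta}{\mathbb E[W_n]}}W_n(x+s)+h\Big)\Big],\qquad G_n(x)=G_n(x;0).$$ Then for any constant $a\in\mathbb R$, $$c_n(s)=\frac1n\log\frac{\int_{-\infty}^\infty e^{-nG_n(\frac{x}{\sqrt n}+a;s)}\,dx}{\int_{-\infty}^\infty e^{-nG_n(\frac{x}{\sqrt n}+a)}\,dx}.$$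
   Context: In $c_n$ the expectation is under $\mu_n$; in $G_n$ the expectation is over $W_n$, i.e. $\frac1n\sum_i f(w_i)$. *)

theory Defs
  imports "HOL-Analysis.Analysis"
begin

definition spins :: "nat \<Rightarrow> (nat \<Rightarrow> real) set" where
  "spins n = PiE {..<n} (\<lambda>_. {-1, 1})"

text \<open>E[W_n] with W_n = w_I, I uniform on [n].\<close>
definition EW :: "nat \<Rightarrow> (nat \<Rightarrow> real) \<Rightarrow> real" where
  "EW n w = (\<Sum>i<n. w i) / real n"

definition gibbs_weight :: "nat \<Rightarrow> (nat \<Rightarrow> real) \<Rightarrow> real \<Rightarrow> real \<Rightarrow> (nat \<Rightarrow> real) \<Rightarrow> real" where
  "gibbs_weight n w \<beta> h \<sigma> =
     exp (\<beta> / (2 * real n * EW n w) * (\<Sum>i<n. w i * \<sigma> i)^2 + h * (\<Sum>i<n. \<sigma> i))"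

definition Zn :: "nat \<Rightarrow> (nat \<Rightarrow> real) \<Rightarrow> real \<Rightarrow> real \<Rightarrow> real" where
  "Zn n w \<beta> h = (\<Sum>\<sigma>\<in>spins n. gibbs_weight n w \<beta> h \<sigma>)"

definition mu_expect :: "nat \<Rightarrow> (nat \<Rightarrow> real) \<Rightarrow> real \<Rightarrow> real \<Rightarrow> ((nat \<Rightarrow> real) \<Rightarrow> real) \<Rightarrow> real" where
  "mu_expect n w \<beta> h f = (\<Sum>\<sigma>\<in>spins n. gibbs_weight n w \<beta> h \<sigma> * f \<sigma>) / Zn n w \<beta> h"

definition c_n :: "nat \<Rightarrow> (nat \<Rightarrow> real) \<Rightarrow> real \<Rightarrow> real \<Rightarrow> real \<Rightarrow> real" where
  "c_n n w \<beta> h s = (1 / real n) *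
     ln (mu_expect n w \<beta> h (\<lambda>\<sigma>. exp (s * sqrt (\<beta> / EW n w) * (\<Sum>i<n. w i * \<sigma> i))))"

text \<open>G_n(x;s); the expectation over W_n is the empirical average over i.\<close>
definition G_n :: "nat \<Rightarrow> (nat \<Rightarrow> real) \<Rightarrow> real \<Rightarrow> real \<Rightarrow> real \<Rightarrow> real \<Rightarrow> real" where
  "G_n n w \<beta> h x s = x^2 / 2 -
     (\<Sum>i<n. ln (cosh (sqrt (\<beta> / EW n w) * w i * (x + s) + h))) / real n"

end

theory Submission
  imports Defs "HOL-Probability.Probability"
begin

lemma gauss_int:
  fixes m c :: real assumes m: "m > 0"
  shows "integrable lborel (\<lambda>y. exp (- m * y^2 / 2 + c * y))"
    and "(\<integral>y. exp (- m * y^2 / 2 + c * y) \<partial>lborel) = sqrt (2*pi/m) * exp (c^2/(2*m))"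
proof -
  have eq: "exp (- m * y^2 / 2 + c * y) = (sqrt (2*pi/m) * exp (c^2/(2*m))) * normal_density (c/m) (1/sqrt m) y" for y
  proof -
    have s: "(1 / sqrt m)^2 = 1/m" using m by (simp add: power_divide)
    have "sqrt (2*pi/m) * (1 / sqrt (2 * pi * (1/m))) = 1" using m pi_gt_zero
      by (simp add: field_simps)
    moreover have "c^2/(2*m) + (- ((y - c/m)^2) / (2 * (1/m))) = - m * y^2 / 2 + c * y"
      using m by (simp add: field_simps power2_eq_square)
    ultimately show ?thesis unfolding normal_density_def s
      by (metis (no_types, lifting) exp_add mult.assoc mult.left_commute mult_1 times_divide_eq_right)
  qed
  show "integrable lborel (\<lambda>y. exp (- m * y^2 / 2 + c * y))"
    unfolding eq using m by simp
  show "(\<integral>y. exp (- m * y^2 / 2 + c * y) \<partial>lborel) = sqrt (2*pi/m) * exp (c^2/(2*m))"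
    unfolding eq using m by simp
qed

lemma key:
  fixes n :: nat and w :: "nat \<Rightarrow> real" and \<beta> h s :: real
  assumes n: "n \<ge> 1"
    and wpos: "\<And>i. i < n \<Longrightarrow> w i > 0"
    and b: "\<beta> \<ge> 0"
  shows "sqrt (2*pi/real n) * (\<Sum>\<sigma>\<in>spins n. gibbs_weight n w \<beta> h \<sigma> * exp (s * sqrt (\<beta> / EW n w) * (\<Sum>i<n. w i * \<sigma> i)))
     = 2^n * (\<integral>y. exp (- real n * G_n n w \<beta> h y s) \<partial>lborel)"
proof -
  define m where "m = real n"
  have m: "m > 0" using n by (simp add: m_def)
  have EWpos: "EW n w > 0"
    unfolding EW_def using n wpos by (intro divide_pos_pos sum_pos) (auto simp: lessThan_empty_iff)
  define g where "g = sqrt (\<beta> / EW n w)"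
  have g2: "g^2 = \<beta> / EW n w" unfolding g_def using b EWpos by simp
  define M where "M = (\<lambda>\<sigma>::nat\<Rightarrow>real. \<Sum>i<n. w i * \<sigma> i)"
  define S where "S = (\<lambda>\<sigma>::nat\<Rightarrow>real. \<Sum>i<n. \<sigma> i)"
  define F where "F = (\<lambda>\<sigma> y. exp (- m * y^2 / 2 + (g * M \<sigma>) * y) * exp (g * s * M \<sigma> + h * S \<sigma>))"
  define t where "t = (\<lambda>y i. sqrt (\<beta> / EW n w) * w i * (y + s) + h)"
  have intF: "integrable lborel (F \<sigma>)" for \<sigma>
    unfolding F_def by (intro integrable_mult_left gauss_int(1)[OF m])
  have IF: "(\<integral>y. F \<sigma> y \<partial>lborel) = sqrt (2*pi/m) * (gibbs_weight n w \<beta> h \<sigma> * exp (s * g * M \<sigma>))" for \<sigma>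
  proof -
    have "(\<integral>y. F \<sigma> y \<partial>lborel) = sqrt (2*pi/m) * exp ((g * M \<sigma>)^2/(2*m)) * exp (g * s * M \<sigma> + h * S \<sigma>)"
      unfolding F_def integral_mult_left_zero gauss_int(2)[OF m] ..
    also have "(g * M \<sigma>)^2/(2*m) = \<beta> / (2 * real n * EW n w) * (M \<sigma>)^2"
      using g2 by (simp add: m_def power_mult_distrib)
    finally show ?thesis unfolding gibbs_weight_def M_def S_def
      by (simp add: exp_add algebra_simps)
  qed
  have pw: "(\<Sum>\<sigma>\<in>spins n. F \<sigma> y) = 2^n * exp (- real n * G_n n w \<beta> h y s)" for y
  proof -
    have A: "F \<sigma> y = exp (- m * y^2 / 2) * (\<Prod>i<n. exp (\<sigma> i * t y i))" for \<sigma>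
    proof -
      have "(\<Sum>i<n. \<sigma> i * t y i) = g * M \<sigma> * y + g * s * M \<sigma> + h * S \<sigma>"
        unfolding t_def M_def S_def g_def
        by (simp add: sum.distrib sum_distrib_left algebra_simps)
      then show ?thesis unfolding F_def
        by (simp add: exp_sum[symmetric] exp_add[symmetric] algebra_simps)
    qed
    have B: "(\<Sum>\<sigma>\<in>spins n. \<Prod>i<n. exp (\<sigma> i * t y i)) = (\<Prod>i<n. \<Sum>v\<in>{-1,1}. exp (v * t y i))"
      unfolding spins_def by (rule prod_sum_PiE[symmetric]) auto
    have C: "(\<Prod>i<n. \<Sum>v\<in>{-1::real,1}. exp (v * t y i)) = 2^n * (\<Prod>i<n. cosh (t y i))"
    proof -
      have C1: "(\<Sum>v\<in>{-1::real,1}. exp (v * t y i)) = 2 * cosh (t y i)" for i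
        by (simp add: cosh_def scaleR_conv_of_real)
      show ?thesis by (simp add: C1 prod.distrib)
    qed
    have D: "exp (- real n * G_n n w \<beta> h y s) = exp (- m * y^2 / 2) * (\<Prod>i<n. cosh (t y i))"
    proof -
      have "- real n * G_n n w \<beta> h y s = - m * y^2 / 2 + (\<Sum>i<n. ln (cosh (t y i)))"
        unfolding G_n_def t_def m_def using m m_def by (simp add: field_simps)
      then have "exp (- real n * G_n n w \<beta> h y s) = exp (- m * y^2 / 2 + (\<Sum>i<n. ln (cosh (t y i))))"
        by simp
      also have "\<dots> = exp (- m * y^2 / 2) * (\<Prod>i<n. cosh (t y i))"
        unfolding exp_add by (simp add: exp_sum)
      finally show ?thesis .
    qed
    show ?thesis unfolding A sum_distrib_left[symmetric] B C D by simp
  qed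
  have "sqrt (2*pi/real n) * (\<Sum>\<sigma>\<in>spins n. gibbs_weight n w \<beta> h \<sigma> * exp (s * sqrt (\<beta> / EW n w) * (\<Sum>i<n. w i * \<sigma> i)))
      = (\<Sum>\<sigma>\<in>spins n. (\<integral>y. F \<sigma> y \<partial>lborel))"
    unfolding IF sum_distrib_left m_def g_def M_def ..
  also have "\<dots> = (\<integral>y. (\<Sum>\<sigma>\<in>spins n. F \<sigma> y) \<partial>lborel)"
    by (rule Bochner_Integration.integral_sum[symmetric]) (rule intF)
  also have "\<dots> = 2^n * (\<integral>y. exp (- real n * G_n n w \<beta> h y s) \<partial>lborel)"
    unfolding pw by simp
  finally show ?thesis .
qed

theorem lemma3p2:
  fixes n :: nat and w :: "nat \<Rightarrow> real" and \<beta> h s a :: real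
  assumes "n \<ge> 1"
    and "\<And>i. i < n \<Longrightarrow> w i > 0"
    and "\<beta> \<ge> 0"
  shows "c_n n w \<beta> h s =
    (1 / real n) * ln (
      (\<integral>x. exp (- real n * G_n n w \<beta> h (x / sqrt (real n) + a) s) \<partial>lborel) /
      (\<integral>x. exp (- real n * G_n n w \<beta> h (x / sqrt (real n) + a) 0) \<partial>lborel))"
proof -
  define I where "I = (\<lambda>s'. \<integral>y. exp (- real n * G_n n w \<beta> h y s') \<partial>lborel)"
  define K where "K = sqrt (2*pi/real n)"
  have K: "K \<noteq> 0" unfolding K_def using assms(1) pi_gt_zero by simp
  have k1: "K * (\<Sum>\<sigma>\<in>spins n. gibbs_weight n w \<beta> h \<sigma> * exp (s * sqrt (\<beta> / EW n w) * (\<Sum>i<n. w i * \<sigma> i))) = 2^n * I s"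
    unfolding K_def I_def by (rule key[OF assms])
  have k0: "K * Zn n w \<beta> h = 2^n * I 0"
    using key[OF assms, where s=0] unfolding K_def I_def Zn_def by simp
  have aff: "(\<integral>x. exp (- real n * G_n n w \<beta> h (x / sqrt (real n) + a) s') \<partial>lborel) = sqrt (real n) * I s'" for s'
  proof -
    have "I s' = \<bar>1 / sqrt (real n)\<bar> *\<^sub>R (\<integral>x. exp (- real n * G_n n w \<beta> h (a + 1 / sqrt (real n) * x) s') \<partial>lborel)"
      unfolding I_def by (rule lborel_integral_real_affine) (use assms(1) in simp)
    then show ?thesis using assms(1) by (simp add: field_simps add.commute)
  qed
  have "mu_expect n w \<beta> h (\<lambda>\<sigma>. exp (s * sqrt (\<beta> / EW n w) * (\<Sum>i<n. w i * \<sigma> i))) = I s / I 0"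
  proof -
    have "mu_expect n w \<beta> h (\<lambda>\<sigma>. exp (s * sqrt (\<beta> / EW n w) * (\<Sum>i<n. w i * \<sigma> i)))
        = (K * (\<Sum>\<sigma>\<in>spins n. gibbs_weight n w \<beta> h \<sigma> * exp (s * sqrt (\<beta> / EW n w) * (\<Sum>i<n. w i * \<sigma> i)))) / (K * Zn n w \<beta> h)"
      unfolding mu_expect_def using K by simp
    also have "\<dots> = I s / I 0" unfolding k1 k0 by simp
    finally show ?thesis .
  qed
  moreover have "sqrt (real n) * I s / (sqrt (real n) * I 0) = I s / I 0"
    using assms(1) by simp
  ultimately show ?thesis unfolding c_n_def aff by simp
qed

end
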